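(* Let $G$ be a TDLC-group and $M$ a finitely generated discrete $\mathbb{Q}[G]$-module. Any two filling pseudo-norms on $M$ are equivalent. In particular, every filling pseudo-norm on a finitely generated proper permutation module $\mathbb{Q}[\Omega]$ is equivalent to the $\ell_1$-norm $\|\cdot\|_1^\Omega$, and hence is a norm.
   Context: A TDLC-group is a totally disconnected locally compact Hausdorff topological group. A discrete $\mathbb{Q}[G]$-module is a left $\mathbb{Q}[G]$-module in which every element has open stabilizer. A $G$-set $\Omega$ is proper if all point stabilizers are compact open; $\mathbb{Q}[\Omega]$ is then a proper permutation module, finitely generated iff $\Omega/G$ is finite, with $\ell_1$-norm $\|\sum a_\omega\omega\|_1^\Omega=\sum|a_\omega|$. For a surjection $\partial:\mathbb{Q}[\Omega]\twoheadrightarrow M$ from a finitely generated proper permutation module, the filling pseudo-norm is $\|m\|_\partial=\inf\{\|x\|_1^\Omega:\partial(x)=m\}$. Two pseudo-norms $\|\cdot\|,\|\cdot\|'$ on a vector space $V$ are equivalent if there is $C>0$ with $\|v\|\le C\|v\|'$ and $\|v\|'\le C\|v\|$ for all $v\in V$. *)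

theory Defs
  imports "HOL-Analysis.Analysis" "HOL-Algebra.Group_Action" "HOL-Library.Function_Algebras"
begin

definition totally_disconnected_space :: "'a topology \<Rightarrow> bool" where
  "totally_disconnected_space X \<longleftrightarrow> (\<forall>S. connectedin X S \<longrightarrow> (\<exists>a. S \<subseteq> {a}))"

definition TDLC_group :: "('g, 'b) monoid_scheme \<Rightarrow> 'g topology \<Rightarrow> bool" where
  "TDLC_group G T \<longleftrightarrow> group G \<and> topspace T = carrier G
     \<and> continuous_map (prod_topology T T) T (\<lambda>p. fst p \<otimes>\<^bsub>G\<^esub> snd p)
     \<and> continuous_map T T (\<lambda>g. inv\<^bsub>G\<^esub> g)
     \<and> Hausdorff_space T \<and> locally_compact_space T \<and> totally_disconnected_space T"

text \<open>A Q[G]-module: a Q-subspace M of a rational vector space (scalar multiplication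
  smul) with a linear G-action act on M; discrete: every stabiliser is open.\<close>

definition discrete_QG_module ::
  "('g, 'b) monoid_scheme \<Rightarrow> 'g topology \<Rightarrow> 'm::ab_group_add set \<Rightarrow> (rat \<Rightarrow> 'm \<Rightarrow> 'm)
     \<Rightarrow> ('g \<Rightarrow> 'm \<Rightarrow> 'm) \<Rightarrow> bool" where
  "discrete_QG_module G T M smul act \<longleftrightarrow>
     vector_space smul \<and> module.subspace smul M
     \<and> (\<forall>g\<in>carrier G. \<forall>x\<in>M. act g x \<in> M)
     \<and> (\<forall>g\<in>carrier G. \<forall>x\<in>M. \<forall>y\<in>M. act g (x + y) = act g x + act g y)
     \<and> (\<forall>g\<in>carrier G. \<forall>c. \<forall>x\<in>M. act g (smul c x) = smul c (act g x))
     \<and> (\<forall>x\<in>M. act \<one>\<^bsub>G\<^esub> x = x)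
     \<and> (\<forall>g\<in>carrier G. \<forall>h\<in>carrier G. \<forall>x\<in>M. act (g \<otimes>\<^bsub>G\<^esub> h) x = act g (act h x))
     \<and> (\<forall>x\<in>M. openin T {g \<in> carrier G. act g x = x})"

definition fg_discrete_QG_module ::
  "('g, 'b) monoid_scheme \<Rightarrow> 'g topology \<Rightarrow> 'm::ab_group_add set \<Rightarrow> (rat \<Rightarrow> 'm \<Rightarrow> 'm)
     \<Rightarrow> ('g \<Rightarrow> 'm \<Rightarrow> 'm) \<Rightarrow> bool" where
  "fg_discrete_QG_module G T M smul act \<longleftrightarrow> discrete_QG_module G T M smul act
     \<and> (\<exists>S. finite S \<and> S \<subseteq> M \<and> M = module.span smul (\<Union>g\<in>carrier G. act g ` S))"

definition proper_G_set :: "('g, 'b) monoid_scheme \<Rightarrow> 'g topology \<Rightarrow> 'w set \<Rightarrow> ('g \<Rightarrow> 'w \<Rightarrow> 'w) \<Rightarrow> bool" where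
  "proper_G_set G T \<Omega> \<alpha> \<longleftrightarrow> group_action G \<Omega> \<alpha>
     \<and> (\<forall>\<omega>\<in>\<Omega>. compactin T {g \<in> carrier G. \<alpha> g \<omega> = \<omega>} \<and> openin T {g \<in> carrier G. \<alpha> g \<omega> = \<omega>})"

definition fg_proper_G_set :: "('g, 'b) monoid_scheme \<Rightarrow> 'g topology \<Rightarrow> 'w set \<Rightarrow> ('g \<Rightarrow> 'w \<Rightarrow> 'w) \<Rightarrow> bool" where
  "fg_proper_G_set G T \<Omega> \<alpha> \<longleftrightarrow> proper_G_set G T \<Omega> \<alpha>
     \<and> (\<exists>F. finite F \<and> F \<subseteq> \<Omega> \<and> (\<forall>\<omega>\<in>\<Omega>. \<exists>g\<in>carrier G. \<exists>f\<in>F. \<omega> = \<alpha> g f))"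

text \<open>Q[\<Omega>]: finitely supported rational functions on \<Omega>.\<close>
definition supp_q :: "('w \<Rightarrow> rat) \<Rightarrow> 'w set" where
  "supp_q x = {\<omega>. x \<omega> \<noteq> 0}"

definition perm_module :: "'w set \<Rightarrow> ('w \<Rightarrow> rat) set" where
  "perm_module \<Omega> = {x. finite (supp_q x) \<and> supp_q x \<subseteq> \<Omega>}"

definition perm_scale :: "rat \<Rightarrow> ('w \<Rightarrow> rat) \<Rightarrow> ('w \<Rightarrow> rat)" where
  "perm_scale c x = (\<lambda>\<omega>. c * x \<omega>)"

text \<open>The action (g x)(\<omega>) = x(g^-1 \<omega>), i.e. g . (sum a_w w) = sum a_w (g w).\<close>
definition perm_act :: "('g, 'b) monoid_scheme \<Rightarrow> ('g \<Rightarrow> 'w \<Rightarrow> 'w) \<Rightarrow> 'w set \<Rightarrow> 'g \<Rightarrow> ('w \<Rightarrow> rat) \<Rightarrow> ('w \<Rightarrow> rat)" where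
  "perm_act G \<alpha> \<Omega> g x = (\<lambda>\<omega>. if \<omega> \<in> \<Omega> then x (\<alpha> (inv\<^bsub>G\<^esub> g) \<omega>) else 0)"

definition l1_norm :: "('w \<Rightarrow> rat) \<Rightarrow> real" where
  "l1_norm x = (\<Sum>\<omega>\<in>supp_q x. \<bar>real_of_rat (x \<omega>)\<bar>)"

definition filling ::
  "('g, 'b) monoid_scheme \<Rightarrow> 'g topology \<Rightarrow> 'm::ab_group_add set \<Rightarrow> (rat \<Rightarrow> 'm \<Rightarrow> 'm)
     \<Rightarrow> ('g \<Rightarrow> 'm \<Rightarrow> 'm) \<Rightarrow> 'w set \<Rightarrow> ('g \<Rightarrow> 'w \<Rightarrow> 'w) \<Rightarrow> (('w \<Rightarrow> rat) \<Rightarrow> 'm) \<Rightarrow> bool" where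
  "filling G T M smul act \<Omega> \<alpha> d \<longleftrightarrow> fg_proper_G_set G T \<Omega> \<alpha>
     \<and> d ` perm_module \<Omega> = M
     \<and> (\<forall>x\<in>perm_module \<Omega>. \<forall>y\<in>perm_module \<Omega>. d (x + y) = d x + d y)
     \<and> (\<forall>c. \<forall>x\<in>perm_module \<Omega>. d (perm_scale c x) = smul c (d x))
     \<and> (\<forall>g\<in>carrier G. \<forall>x\<in>perm_module \<Omega>. d (perm_act G \<alpha> \<Omega> g x) = act g (d x))"

definition filling_norm :: "'w set \<Rightarrow> (('w \<Rightarrow> rat) \<Rightarrow> 'm) \<Rightarrow> 'm \<Rightarrow> real" where
  "filling_norm \<Omega> d m = Inf (l1_norm ` {x \<in> perm_module \<Omega>. d x = m})"

definition equivalent_pseudo_norms :: "'v set \<Rightarrow> ('v \<Rightarrow> real) \<Rightarrow> ('v \<Rightarrow> real) \<Rightarrow> bool" where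
  "equivalent_pseudo_norms V n1 n2 \<longleftrightarrow>
     (\<exists>C>0. \<forall>v\<in>V. n1 v \<le> C * n2 v \<and> n2 v \<le> C * n1 v)"

end

theory Submission
  imports Defs
begin



lemma ga_inv:
  assumes "group_action G E \<phi>" "g \<in> carrier G" "w \<in> E"
  shows "\<phi> (inv\<^bsub>G\<^esub> g) (\<phi> g w) = w" "\<phi> g (\<phi> (inv\<^bsub>G\<^esub> g) w) = w"
    "\<phi> g w \<in> E" "\<phi> (inv\<^bsub>G\<^esub> g) w \<in> E"
proof -
  interpret group_action G E \<phi> by fact
  have grp: "group G" using group_hom group_hom.axioms(1) by blast
  have ig: "inv\<^bsub>G\<^esub> g \<in> carrier G" using grp assms(2) by (simp add: group.inv_closed)
  have one: "\<phi> \<one>\<^bsub>G\<^esub> w = w" using id_eq_one assms(3) by (metis restrict_apply')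
  show "\<phi> (inv\<^bsub>G\<^esub> g) (\<phi> g w) = w"
    using composition_rule[OF assms(3) ig assms(2)] grp assms one by (simp add: group.l_inv)
  show "\<phi> g (\<phi> (inv\<^bsub>G\<^esub> g) w) = w"
    using composition_rule[OF assms(3) assms(2) ig] grp assms one by (simp add: group.r_inv)
  show "\<phi> g w \<in> E" using element_image assms by blast
  show "\<phi> (inv\<^bsub>G\<^esub> g) w \<in> E" using element_image assms ig by blast
qed

definition ind :: "'w \<Rightarrow> ('w \<Rightarrow> rat)" where "ind w = (\<lambda>v. if v = w then 1 else 0)"

lemma l1_super:
  assumes "finite A" "supp_q x \<subseteq> A"
  shows "l1_norm x = (\<Sum>w\<in>A. \<bar>real_of_rat (x w)\<bar>)"
  unfolding l1_norm_def
  by (rule sum.mono_neutral_left) (use assms in \<open>auto simp: supp_q_def\<close>)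

lemma l1_nonneg: "l1_norm x \<ge> 0"
  unfolding l1_norm_def by (simp add: sum_nonneg)

lemma pm_add: "x \<in> perm_module \<Omega> \<Longrightarrow> y \<in> perm_module \<Omega> \<Longrightarrow> x + y \<in> perm_module \<Omega>"
proof -
  assume a: "x \<in> perm_module \<Omega>" "y \<in> perm_module \<Omega>"
  have "supp_q (x+y) \<subseteq> supp_q x \<union> supp_q y" by (auto simp: supp_q_def)
  with a show ?thesis unfolding perm_module_def by (auto intro: finite_subset)
qed

lemma pm_scale: "x \<in> perm_module \<Omega> \<Longrightarrow> perm_scale c x \<in> perm_module \<Omega>"
proof -
  assume a: "x \<in> perm_module \<Omega>"
  have "supp_q (perm_scale c x) \<subseteq> supp_q x" by (auto simp: supp_q_def perm_scale_def)
  with a show ?thesis unfolding perm_module_def by (auto intro: finite_subset)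
qed

lemma pm_zero: "0 \<in> perm_module \<Omega>"
  by (simp add: perm_module_def supp_q_def)

lemma pm_ind: "w \<in> \<Omega> \<Longrightarrow> ind w \<in> perm_module \<Omega>"
proof -
  assume "w \<in> \<Omega>"
  have "supp_q (ind w) = {w}" by (auto simp: supp_q_def ind_def)
  with \<open>w \<in> \<Omega>\<close> show ?thesis by (simp add: perm_module_def)
qed

lemma l1_add:
  assumes "x \<in> perm_module \<Omega>" "y \<in> perm_module \<Omega>"
  shows "l1_norm (x + y) \<le> l1_norm x + l1_norm y"
proof -
  let ?A = "supp_q x \<union> supp_q y"
  have fA: "finite ?A" using assms by (simp add: perm_module_def)
  have s: "supp_q (x+y) \<subseteq> ?A" by (auto simp: supp_q_def)
  have "l1_norm (x+y) = (\<Sum>w\<in>?A. \<bar>real_of_rat ((x+y) w)\<bar>)" by (rule l1_super[OF fA s])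
  also have "\<dots> \<le> (\<Sum>w\<in>?A. \<bar>real_of_rat (x w)\<bar> + \<bar>real_of_rat (y w)\<bar>)"
    by (rule sum_mono) (metis abs_triangle_ineq of_rat_add plus_fun_apply)
  also have "\<dots> = l1_norm x + l1_norm y"
    by (simp add: sum.distrib l1_super[OF fA] )
  finally show ?thesis .
qed

lemma l1_scale: "l1_norm (perm_scale c x) = \<bar>real_of_rat c\<bar> * l1_norm x"
proof (cases "c = 0")
  case True
  then show ?thesis by (simp add: l1_norm_def perm_scale_def supp_q_def)
next
  case False
  then have "supp_q (perm_scale c x) = supp_q x" by (auto simp: supp_q_def perm_scale_def)
  then show ?thesis by (simp add: l1_norm_def perm_scale_def sum_distrib_left of_rat_mult abs_mult)
qed

lemma l1_zero: "x \<in> perm_module \<Omega> \<Longrightarrow> l1_norm x = 0 \<Longrightarrow> x = 0"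
proof -
  assume a: "x \<in> perm_module \<Omega>" "l1_norm x = 0"
  have f: "finite (supp_q x)" using a by (simp add: perm_module_def)
  have "\<forall>w\<in>supp_q x. \<bar>real_of_rat (x w)\<bar> = 0"
    using a(2) sum_nonneg_eq_0_iff[OF f, of "\<lambda>w. \<bar>real_of_rat (x w)\<bar>"]
    by (simp add: l1_norm_def)
  then show "x = 0" by (auto simp: supp_q_def fun_eq_iff)
qed

lemma act_supp:
  assumes ga: "group_action G \<Omega> \<alpha>" and g: "g \<in> carrier G" and x: "x \<in> perm_module \<Omega>"
  shows "supp_q (perm_act G \<alpha> \<Omega> g x) = \<alpha> g ` supp_q x"
proof
  have sx: "supp_q x \<subseteq> \<Omega>" using x by (simp add: perm_module_def)
  show "supp_q (perm_act G \<alpha> \<Omega> g x) \<subseteq> \<alpha> g ` supp_q x"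
  proof
    fix v assume "v \<in> supp_q (perm_act G \<alpha> \<Omega> g x)"
    then have v: "v \<in> \<Omega>" "x (\<alpha> (inv\<^bsub>G\<^esub> g) v) \<noteq> 0"
      by (auto simp: supp_q_def perm_act_def split: if_splits)
    then show "v \<in> \<alpha> g ` supp_q x"
      using ga_inv[OF ga g v(1)] by (auto simp: supp_q_def intro!: image_eqI[where x="\<alpha> (inv\<^bsub>G\<^esub> g) v"])
  qed
  show "\<alpha> g ` supp_q x \<subseteq> supp_q (perm_act G \<alpha> \<Omega> g x)"
  proof
    fix v assume "v \<in> \<alpha> g ` supp_q x"
    then obtain w where w: "w \<in> supp_q x" "v = \<alpha> g w" by auto
    with sx have "w \<in> \<Omega>" by auto
    with w show "v \<in> supp_q (perm_act G \<alpha> \<Omega> g x)"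
      using ga_inv[OF ga g] by (auto simp: supp_q_def perm_act_def)
  qed
qed

lemma pm_act:
  assumes ga: "group_action G \<Omega> \<alpha>" and g: "g \<in> carrier G" and x: "x \<in> perm_module \<Omega>"
  shows "perm_act G \<alpha> \<Omega> g x \<in> perm_module \<Omega>"
  using act_supp[OF assms] x ga_inv(3)[OF ga g] unfolding perm_module_def by auto

lemma l1_act:
  assumes ga: "group_action G \<Omega> \<alpha>" and g: "g \<in> carrier G" and x: "x \<in> perm_module \<Omega>"
  shows "l1_norm (perm_act G \<alpha> \<Omega> g x) = l1_norm x"
proof -
  have sx: "supp_q x \<subseteq> \<Omega>" using x by (simp add: perm_module_def)
  have inj: "inj_on (\<alpha> g) (supp_q x)"
    using group_action.inj_prop[OF ga g] sx by (rule inj_on_subset)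
  have "l1_norm (perm_act G \<alpha> \<Omega> g x) = (\<Sum>v\<in>\<alpha> g ` supp_q x. \<bar>real_of_rat (perm_act G \<alpha> \<Omega> g x v)\<bar>)"
    by (simp add: l1_norm_def act_supp[OF assms])
  also have "\<dots> = (\<Sum>w\<in>supp_q x. \<bar>real_of_rat (perm_act G \<alpha> \<Omega> g x (\<alpha> g w))\<bar>)"
    by (simp add: sum.reindex[OF inj])
  also have "\<dots> = l1_norm x"
    unfolding l1_norm_def
    by (rule sum.cong) (use sx ga_inv[OF ga g] in \<open>auto simp: perm_act_def\<close>)
  finally show ?thesis .
qed

lemma act_ind:
  assumes ga: "group_action G \<Omega> \<alpha>" and g: "g \<in> carrier G" and f: "f \<in> \<Omega>"
  shows "perm_act G \<alpha> \<Omega> g (ind f) = ind (\<alpha> g f)"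
proof
  fix v
  show "perm_act G \<alpha> \<Omega> g (ind f) v = ind (\<alpha> g f) v"
  proof (cases "v \<in> \<Omega>")
    case True
    then show ?thesis using ga_inv[OF ga g] f unfolding perm_act_def ind_def by metis
  next
    case False
    then show ?thesis using ga_inv(3)[OF ga g f] unfolding perm_act_def ind_def by auto
  qed
qed



lemma lin_zero:
  assumes "\<forall>x\<in>perm_module \<Omega>. \<forall>y\<in>perm_module \<Omega>. d (x + y) = d x + (d y :: 'm::ab_group_add)"
  shows "d 0 = 0"
proof -
  have "d (0 + 0) = d 0 + d 0" using assms pm_zero by blast
  then show ?thesis by simp
qed

lemma lift_exists:
  fixes d1 :: "('w1 \<Rightarrow> rat) \<Rightarrow> 'm::ab_group_add" and d2 :: "('w2 \<Rightarrow> rat) \<Rightarrow> 'm"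
  assumes F: "finite F" "F \<subseteq> \<Omega>1" "\<forall>\<omega>\<in>\<Omega>1. \<exists>g\<in>carrier G. \<exists>f\<in>F. \<omega> = \<alpha>1 g f"
    and ga1: "group_action G \<Omega>1 \<alpha>1" and ga2: "group_action G \<Omega>2 \<alpha>2"
    and add1: "\<forall>x\<in>perm_module \<Omega>1. \<forall>y\<in>perm_module \<Omega>1. d1 (x + y) = d1 x + d1 y"
    and sc1: "\<forall>c. \<forall>x\<in>perm_module \<Omega>1. d1 (perm_scale c x) = smul c (d1 x)"
    and eq1: "\<forall>g\<in>carrier G. \<forall>x\<in>perm_module \<Omega>1. d1 (perm_act G \<alpha>1 \<Omega>1 g x) = act g (d1 x)"
    and im1: "d1 ` perm_module \<Omega>1 = M"
    and im2: "d2 ` perm_module \<Omega>2 = M"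
    and add2: "\<forall>x\<in>perm_module \<Omega>2. \<forall>y\<in>perm_module \<Omega>2. d2 (x + y) = d2 x + d2 y"
    and sc2: "\<forall>c. \<forall>x\<in>perm_module \<Omega>2. d2 (perm_scale c x) = smul c (d2 x)"
    and eq2: "\<forall>g\<in>carrier G. \<forall>x\<in>perm_module \<Omega>2. d2 (perm_act G \<alpha>2 \<Omega>2 g x) = act g (d2 x)"
  shows "\<exists>C>0. \<forall>x\<in>perm_module \<Omega>1. \<exists>y\<in>perm_module \<Omega>2. d2 y = d1 x \<and> l1_norm y \<le> C * l1_norm x"
proof -
  have "\<forall>f\<in>F. \<exists>y\<in>perm_module \<Omega>2. d2 y = d1 (ind f)"
  proof
    fix f assume "f \<in> F"
    then have fO: "f \<in> \<Omega>1" using F(2) by (rule subsetD[rotated])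
    have "d1 (ind f) \<in> d1 ` perm_module \<Omega>1" by (rule imageI[OF pm_ind[OF fO]])
    then have "d1 (ind f) \<in> d2 ` perm_module \<Omega>2" by (simp only: im1 im2)
    then obtain y where "y \<in> perm_module \<Omega>2" "d1 (ind f) = d2 y" by (rule imageE)
    then show "\<exists>y\<in>perm_module \<Omega>2. d2 y = d1 (ind f)" by (intro bexI[of _ y]) simp_all
  qed
  then have ex: "\<forall>f\<in>F. \<exists>y. y \<in> perm_module \<Omega>2 \<and> d2 y = d1 (ind f)" by blast
  obtain Y where Y: "\<forall>f\<in>F. Y f \<in> perm_module \<Omega>2 \<and> d2 (Y f) = d1 (ind f)"
    using bchoice[OF ex] by blast
  define C where "C = 1 + (\<Sum>f\<in>F. l1_norm (Y f))"
  have Cpos: "C > 0" unfolding C_def using sum_nonneg[of F "\<lambda>f. l1_norm (Y f)"] l1_nonneg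
    by (smt (verit))
  have YC: "l1_norm (Y f) \<le> C" if "f \<in> F" for f
  proof -
    have "l1_norm (Y f) \<le> (\<Sum>f\<in>F. l1_norm (Y f))"
      by (rule member_le_sum) (use that F(1) l1_nonneg in auto)
    then show ?thesis unfolding C_def by simp
  qed
  have basis: "\<exists>z\<in>perm_module \<Omega>2. d2 z = d1 (ind w) \<and> l1_norm z \<le> C" if w: "w \<in> \<Omega>1" for w
  proof -
    obtain g f where gf: "g \<in> carrier G" "f \<in> F" "w = \<alpha>1 g f" using F(3) w by blast
    have fO: "f \<in> \<Omega>1" using gf F(2) by auto
    let ?z = "perm_act G \<alpha>2 \<Omega>2 g (Y f)"
    have zin: "?z \<in> perm_module \<Omega>2" using pm_act[OF ga2 gf(1)] Y gf(2) by blast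
    have "d2 ?z = act g (d2 (Y f))" using eq2 gf(1) Y gf(2) by blast
    also have "\<dots> = act g (d1 (ind f))" using Y gf(2) by simp
    also have "\<dots> = d1 (perm_act G \<alpha>1 \<Omega>1 g (ind f))" using eq1 gf(1) pm_ind[OF fO] by simp
    also have "\<dots> = d1 (ind w)" using act_ind[OF ga1 gf(1) fO] gf(3) by simp
    finally have "d2 ?z = d1 (ind w)" .
    moreover have "l1_norm ?z \<le> C" using l1_act[OF ga2 gf(1)] Y gf(2) YC by simp
    ultimately show ?thesis using zin by blast
  qed
  have main: "\<forall>x\<in>perm_module \<Omega>1. supp_q x = S \<longrightarrow>
      (\<exists>y\<in>perm_module \<Omega>2. d2 y = d1 x \<and> l1_norm y \<le> C * l1_norm x)" if "finite S" for S
    using that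
  proof (induction S rule: finite_induct)
    case empty
    show ?case
    proof (intro ballI impI)
      fix x :: "'w1 \<Rightarrow> rat" assume "supp_q x = {}"
      then have "x = 0" by (auto simp: supp_q_def fun_eq_iff)
      then have e: "d2 0 = d1 x" by (simp only: lin_zero[OF add1] lin_zero[OF add2])
      have l: "l1_norm (0 :: 'w2 \<Rightarrow> rat) = 0" by (simp add: l1_norm_def supp_q_def)
      have "l1_norm (0 :: 'w2 \<Rightarrow> rat) \<le> C * l1_norm x"
        unfolding l using Cpos l1_nonneg[of x] by simp
      then show "\<exists>y\<in>perm_module \<Omega>2. d2 y = d1 x \<and> l1_norm y \<le> C * l1_norm x"
        using e pm_zero[of \<Omega>2] by blast
    qed
  next
    case (insert w S)
    show ?case
    proof (intro ballI impI)
      fix x :: "'w1 \<Rightarrow> rat" assume x: "x \<in> perm_module \<Omega>1" and sx: "supp_q x = insert w S"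
      define x' where "x' = x(w := 0)"
      have sx': "supp_q x' = S" using sx insert(2) by (auto simp: supp_q_def x'_def)
      have wO: "w \<in> \<Omega>1" using x sx by (auto simp: perm_module_def)
      have x'in: "x' \<in> perm_module \<Omega>1" using x sx' sx by (auto simp: perm_module_def)
      have xdec: "x = x' + perm_scale (x w) (ind w)"
        by (auto simp: fun_eq_iff x'_def perm_scale_def ind_def)
      obtain y' where y': "y' \<in> perm_module \<Omega>2" "d2 y' = d1 x'" "l1_norm y' \<le> C * l1_norm x'"
        using insert(3) x'in sx' by blast
      obtain z where z: "z \<in> perm_module \<Omega>2" "d2 z = d1 (ind w)" "l1_norm z \<le> C"
        using basis[OF wO] by blast
      let ?y = "y' + perm_scale (x w) z"
      have yin: "?y \<in> perm_module \<Omega>2" using pm_add pm_scale y'(1) z(1) by blast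
      have "d2 ?y = d2 y' + d2 (perm_scale (x w) z)" by (rule add2[rule_format, OF y'(1) pm_scale[OF z(1)]])
      also have "\<dots> = d2 y' + smul (x w) (d2 z)" by (simp only: sc2[rule_format, OF z(1)])
      also have "\<dots> = d1 x' + d1 (perm_scale (x w) (ind w))"
        using y'(2) z(2) sc1 pm_ind[OF wO] by simp
      also have "\<dots> = d1 (x' + perm_scale (x w) (ind w))" by (rule add1[rule_format, symmetric, OF x'in pm_scale[OF pm_ind[OF wO]]])
      also have "\<dots> = d1 x" using xdec by simp
      finally have dy: "d2 ?y = d1 x" .
      have l1x: "l1_norm x = \<bar>real_of_rat (x w)\<bar> + l1_norm x'"
      proof -
        have "l1_norm x = (\<Sum>v\<in>insert w S. \<bar>real_of_rat (x v)\<bar>)" by (simp add: l1_norm_def sx)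
        also have "\<dots> = \<bar>real_of_rat (x w)\<bar> + (\<Sum>v\<in>S. \<bar>real_of_rat (x v)\<bar>)"
          using insert(1,2) by simp
        also have "(\<Sum>v\<in>S. \<bar>real_of_rat (x v)\<bar>) = l1_norm x'"
          unfolding l1_norm_def sx' using insert(2) by (intro sum.cong) (auto simp: x'_def)
        finally show ?thesis .
      qed
      have "l1_norm ?y \<le> l1_norm y' + l1_norm (perm_scale (x w) z)"
        using l1_add y'(1) z(1) pm_scale by blast
      also have "\<dots> = l1_norm y' + \<bar>real_of_rat (x w)\<bar> * l1_norm z" by (simp add: l1_scale)
      also have "\<dots> \<le> C * l1_norm x' + \<bar>real_of_rat (x w)\<bar> * C"
        using y'(3) z(3) by (intro add_mono mult_left_mono) auto
      also have "\<dots> = C * l1_norm x" using l1x by (simp add: algebra_simps)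
      finally show "\<exists>y\<in>perm_module \<Omega>2. d2 y = d1 x \<and> l1_norm y \<le> C * l1_norm x"
        using yin dy by blast
    qed
  qed
  show ?thesis
  proof (intro exI[of _ C] conjI ballI)
    fix x assume "x \<in> perm_module \<Omega>1"
    moreover have "finite (supp_q x)" using \<open>x \<in> perm_module \<Omega>1\<close> by (simp add: perm_module_def)
    ultimately show "\<exists>y\<in>perm_module \<Omega>2. d2 y = d1 x \<and> l1_norm y \<le> C * l1_norm x"
      using main by blast
  qed (rule Cpos)
qed

lemma norm_compare:
  fixes d1 :: "('w1 \<Rightarrow> rat) \<Rightarrow> 'm" and d2 :: "('w2 \<Rightarrow> rat) \<Rightarrow> 'm"
  assumes C: "C > 0" and lift: "\<forall>x\<in>perm_module \<Omega>1. \<exists>y\<in>perm_module \<Omega>2. d2 y = d1 x \<and> l1_norm y \<le> C * l1_norm x"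
    and im1: "d1 ` perm_module \<Omega>1 = M" and m: "m \<in> M"
  shows "filling_norm \<Omega>2 d2 m \<le> C * filling_norm \<Omega>1 d1 m"
proof -
  let ?S1 = "l1_norm ` {x \<in> perm_module \<Omega>1. d1 x = m}"
  let ?S2 = "l1_norm ` {x \<in> perm_module \<Omega>2. d2 x = m}"
  have ne1: "?S1 \<noteq> {}" using im1 m by auto
  have bdd2: "bdd_below ?S2" by (rule bdd_belowI[of _ 0]) (auto simp: l1_nonneg)
  have "filling_norm \<Omega>2 d2 m / C \<le> Inf ?S1"
  proof (rule cInf_greatest[OF ne1])
    fix t assume "t \<in> ?S1"
    then obtain x where x: "x \<in> perm_module \<Omega>1" "d1 x = m" "t = l1_norm x" by auto
    obtain y where y: "y \<in> perm_module \<Omega>2" "d2 y = d1 x" "l1_norm y \<le> C * l1_norm x"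
      using lift x(1) by blast
    have "filling_norm \<Omega>2 d2 m \<le> l1_norm y"
      unfolding filling_norm_def using y x by (intro cInf_lower[OF _ bdd2]) auto
    then show "filling_norm \<Omega>2 d2 m / C \<le> t" using y(3) x(3) C by (simp add: divide_le_eq mult.commute)
  qed
  then show ?thesis using C unfolding filling_norm_def by (simp add: divide_le_eq mult.commute)
qed

lemma fn_nonneg:
  assumes "m \<in> d ` perm_module \<Omega>"
  shows "filling_norm \<Omega> d m \<ge> 0"
  unfolding filling_norm_def
  by (rule cInf_greatest) (use assms in \<open>auto simp: l1_nonneg\<close>)

theorem corollary4p3:
  fixes G :: "('g, 'b) monoid_scheme" and T :: "'g topology"
    and M :: "'m::ab_group_add set" and smul :: "rat \<Rightarrow> 'm \<Rightarrow> 'm" and act :: "'g \<Rightarrow> 'm \<Rightarrow> 'm"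
    and \<Omega>1 :: "'w1 set" and \<alpha>1 :: "'g \<Rightarrow> 'w1 \<Rightarrow> 'w1" and d1 :: "('w1 \<Rightarrow> rat) \<Rightarrow> 'm"
    and \<Omega>2 :: "'w2 set" and \<alpha>2 :: "'g \<Rightarrow> 'w2 \<Rightarrow> 'w2" and d2 :: "('w2 \<Rightarrow> rat) \<Rightarrow> 'm"
    and \<Omega> :: "'w set" and \<alpha> :: "'g \<Rightarrow> 'w \<Rightarrow> 'w"
    and \<Omega>' :: "'v set" and \<alpha>' :: "'g \<Rightarrow> 'v \<Rightarrow> 'v" and d' :: "('v \<Rightarrow> rat) \<Rightarrow> ('w \<Rightarrow> rat)"
  assumes "TDLC_group G T"
  shows "(fg_discrete_QG_module G T M smul act
            \<and> filling G T M smul act \<Omega>1 \<alpha>1 d1 \<and> filling G T M smul act \<Omega>2 \<alpha>2 d2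
          \<longrightarrow> equivalent_pseudo_norms M (filling_norm \<Omega>1 d1) (filling_norm \<Omega>2 d2))
       \<and> (fg_proper_G_set G T \<Omega> \<alpha>
            \<and> filling G T (perm_module \<Omega>) perm_scale (perm_act G \<alpha> \<Omega>) \<Omega>' \<alpha>' d'
          \<longrightarrow> equivalent_pseudo_norms (perm_module \<Omega>) (filling_norm \<Omega>' d') l1_norm
              \<and> (\<forall>x\<in>perm_module \<Omega>. filling_norm \<Omega>' d' x = 0 \<longrightarrow> x = 0))"
proof (intro conjI impI)
  assume H: "fg_discrete_QG_module G T M smul act
            \<and> filling G T M smul act \<Omega>1 \<alpha>1 d1 \<and> filling G T M smul act \<Omega>2 \<alpha>2 d2"
  then have f1: "filling G T M smul act \<Omega>1 \<alpha>1 d1" and f2: "filling G T M smul act \<Omega>2 \<alpha>2 d2" by auto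
  from f1 obtain F1 where F1: "finite F1" "F1 \<subseteq> \<Omega>1" "\<forall>\<omega>\<in>\<Omega>1. \<exists>g\<in>carrier G. \<exists>f\<in>F1. \<omega> = \<alpha>1 g f"
    and ga1: "group_action G \<Omega>1 \<alpha>1"
    unfolding filling_def fg_proper_G_set_def proper_G_set_def by blast
  from f2 obtain F2 where F2: "finite F2" "F2 \<subseteq> \<Omega>2" "\<forall>\<omega>\<in>\<Omega>2. \<exists>g\<in>carrier G. \<exists>f\<in>F2. \<omega> = \<alpha>2 g f"
    and ga2: "group_action G \<Omega>2 \<alpha>2"
    unfolding filling_def fg_proper_G_set_def proper_G_set_def by blast
  have fa1: "d1 ` perm_module \<Omega>1 = M"
      "\<forall>x\<in>perm_module \<Omega>1. \<forall>y\<in>perm_module \<Omega>1. d1 (x + y) = d1 x + d1 y"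
      "\<forall>c. \<forall>x\<in>perm_module \<Omega>1. d1 (perm_scale c x) = smul c (d1 x)"
      "\<forall>g\<in>carrier G. \<forall>x\<in>perm_module \<Omega>1. d1 (perm_act G \<alpha>1 \<Omega>1 g x) = act g (d1 x)"
    using f1 unfolding filling_def by blast+
  have fa2: "d2 ` perm_module \<Omega>2 = M"
      "\<forall>x\<in>perm_module \<Omega>2. \<forall>y\<in>perm_module \<Omega>2. d2 (x + y) = d2 x + d2 y"
      "\<forall>c. \<forall>x\<in>perm_module \<Omega>2. d2 (perm_scale c x) = smul c (d2 x)"
      "\<forall>g\<in>carrier G. \<forall>x\<in>perm_module \<Omega>2. d2 (perm_act G \<alpha>2 \<Omega>2 g x) = act g (d2 x)"
    using f2 unfolding filling_def by blast+
  obtain C1 where C1: "C1 > 0" "\<forall>x\<in>perm_module \<Omega>1. \<exists>y\<in>perm_module \<Omega>2. d2 y = d1 x \<and> l1_norm y \<le> C1 * l1_norm x"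
    using lift_exists[OF F1 ga1 ga2 fa1(2) fa1(3) fa1(4) fa1(1) fa2(1) fa2(2) fa2(3) fa2(4)] by blast
  obtain C2 where C2: "C2 > 0" "\<forall>x\<in>perm_module \<Omega>2. \<exists>y\<in>perm_module \<Omega>1. d1 y = d2 x \<and> l1_norm y \<le> C2 * l1_norm x"
    using lift_exists[OF F2 ga2 ga1 fa2(2) fa2(3) fa2(4) fa2(1) fa1(1) fa1(2) fa1(3) fa1(4)] by blast
  have im1: "d1 ` perm_module \<Omega>1 = M" and im2: "d2 ` perm_module \<Omega>2 = M"
    using fa1 fa2 by auto
  show "equivalent_pseudo_norms M (filling_norm \<Omega>1 d1) (filling_norm \<Omega>2 d2)"
    unfolding equivalent_pseudo_norms_def
  proof (intro exI[of _ "max C1 C2"] conjI ballI)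
    show "max C1 C2 > 0" using C1 by simp
  next
    fix m assume m: "m \<in> M"
    have a: "filling_norm \<Omega>2 d2 m \<le> C1 * filling_norm \<Omega>1 d1 m"
      by (rule norm_compare[OF C1 im1 m])
    have b: "filling_norm \<Omega>1 d1 m \<le> C2 * filling_norm \<Omega>2 d2 m"
      by (rule norm_compare[OF C2 im2 m])
    have n1: "filling_norm \<Omega>1 d1 m \<ge> 0" and n2: "filling_norm \<Omega>2 d2 m \<ge> 0"
      using fn_nonneg[of m d1 \<Omega>1] fn_nonneg[of m d2 \<Omega>2] m im1 im2 by simp_all
    show "filling_norm \<Omega>1 d1 m \<le> max C1 C2 * filling_norm \<Omega>2 d2 m"
      using b mult_right_mono[OF max.cobounded2[of C2 C1] n2] by linarith
    show "filling_norm \<Omega>2 d2 m \<le> max C1 C2 * filling_norm \<Omega>1 d1 m"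
      using a mult_right_mono[OF max.cobounded1[of C1 C2] n1] by linarith
  qed
next
  assume H: "fg_proper_G_set G T \<Omega> \<alpha>
            \<and> filling G T (perm_module \<Omega>) perm_scale (perm_act G \<alpha> \<Omega>) \<Omega>' \<alpha>' d'"
  then have fp: "fg_proper_G_set G T \<Omega> \<alpha>"
    and f2: "filling G T (perm_module \<Omega>) perm_scale (perm_act G \<alpha> \<Omega>) \<Omega>' \<alpha>' d'" by auto
  from fp obtain F1 where F1: "finite F1" "F1 \<subseteq> \<Omega>" "\<forall>\<omega>\<in>\<Omega>. \<exists>g\<in>carrier G. \<exists>f\<in>F1. \<omega> = \<alpha> g f"
    and ga1: "group_action G \<Omega> \<alpha>"
    unfolding fg_proper_G_set_def proper_G_set_def by blast
  from f2 obtain F2 where F2: "finite F2" "F2 \<subseteq> \<Omega>'" "\<forall>\<omega>\<in>\<Omega>'. \<exists>g\<in>carrier G. \<exists>f\<in>F2. \<omega> = \<alpha>' g f"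
    and ga2: "group_action G \<Omega>' \<alpha>'"
    unfolding filling_def fg_proper_G_set_def proper_G_set_def by blast
  have fa2: "d' ` perm_module \<Omega>' = perm_module \<Omega>"
      "\<forall>x\<in>perm_module \<Omega>'. \<forall>y\<in>perm_module \<Omega>'. d' (x + y) = d' x + d' y"
      "\<forall>c. \<forall>x\<in>perm_module \<Omega>'. d' (perm_scale c x) = perm_scale c (d' x)"
      "\<forall>g\<in>carrier G. \<forall>x\<in>perm_module \<Omega>'. d' (perm_act G \<alpha>' \<Omega>' g x) = perm_act G \<alpha> \<Omega> g (d' x)"
    using f2 unfolding filling_def by blast+
  have im2: "d' ` perm_module \<Omega>' = perm_module \<Omega>" by (rule fa2(1))
  have fa1: "(\<lambda>x. x) ` perm_module \<Omega> = perm_module \<Omega>"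
      "\<forall>x\<in>perm_module \<Omega>. \<forall>y\<in>perm_module \<Omega>. (\<lambda>x. x) (x + y) = (\<lambda>x. x) x + (\<lambda>x. x) y"
      "\<forall>c. \<forall>x\<in>perm_module \<Omega>. (\<lambda>x. x) (perm_scale c x) = perm_scale c ((\<lambda>x. x) x)"
      "\<forall>g\<in>carrier G. \<forall>x\<in>perm_module \<Omega>. (\<lambda>x. x) (perm_act G \<alpha> \<Omega> g x) = perm_act G \<alpha> \<Omega> g ((\<lambda>x. x) x)"
    by simp_all
  have idf: "filling_norm \<Omega> (\<lambda>x. x) x = l1_norm x" if xin: "x \<in> perm_module \<Omega>" for x :: "'w \<Rightarrow> rat"
  proof -
    have "{y \<in> perm_module \<Omega>. y = x} = {x}" using xin by auto
    then show ?thesis unfolding filling_norm_def by simp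
  qed
  have imid: "(\<lambda>x. x) ` perm_module \<Omega> = perm_module \<Omega>" by simp
  obtain C1 where C1: "C1 > 0" "\<forall>x\<in>perm_module \<Omega>. \<exists>y\<in>perm_module \<Omega>'. d' y = (\<lambda>x. x) x \<and> l1_norm y \<le> C1 * l1_norm x"
    using lift_exists[OF F1 ga1 ga2 fa1(2) fa1(3) fa1(4) fa1(1) fa2(1) fa2(2) fa2(3) fa2(4)] by blast
  obtain C2 where C2: "C2 > 0" "\<forall>x\<in>perm_module \<Omega>'. \<exists>y\<in>perm_module \<Omega>. (\<lambda>x. x) y = d' x \<and> l1_norm y \<le> C2 * l1_norm x"
    using lift_exists[OF F2 ga2 ga1 fa2(2) fa2(3) fa2(4) fa2(1) fa1(1) fa1(2) fa1(3) fa1(4)] by blast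
  have A: "filling_norm \<Omega>' d' x \<le> C1 * l1_norm x" if x: "x \<in> perm_module \<Omega>" for x
    using norm_compare[OF C1 fa1(1) x] idf[OF x] by simp
  have B: "l1_norm x \<le> C2 * filling_norm \<Omega>' d' x" if x: "x \<in> perm_module \<Omega>" for x
    using norm_compare[OF C2 im2 x] idf[OF x] by simp
  have n2: "filling_norm \<Omega>' d' x \<ge> 0" if x: "x \<in> perm_module \<Omega>" for x
    using fn_nonneg[of x d' \<Omega>'] x im2 by simp
  show "equivalent_pseudo_norms (perm_module \<Omega>) (filling_norm \<Omega>' d') l1_norm"
    unfolding equivalent_pseudo_norms_def
  proof (intro exI[of _ "max C1 C2"] conjI ballI)
    show "max C1 C2 > 0" using C1 by simp
  next
    fix x assume x: "x \<in> perm_module \<Omega>"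
    show "filling_norm \<Omega>' d' x \<le> max C1 C2 * l1_norm x"
      using A[OF x] mult_right_mono[OF max.cobounded1[of C1 C2] l1_nonneg[of x]] by linarith
    show "l1_norm x \<le> max C1 C2 * filling_norm \<Omega>' d' x"
      using B[OF x] mult_right_mono[OF max.cobounded2[of C2 C1] n2[OF x]] by linarith
  qed
  show "\<forall>x\<in>perm_module \<Omega>. filling_norm \<Omega>' d' x = 0 \<longrightarrow> x = 0"
  proof (intro ballI impI)
    fix x assume x: "x \<in> perm_module \<Omega>" and z: "filling_norm \<Omega>' d' x = 0"
    have "l1_norm x = 0" using B[OF x] z l1_nonneg[of x] by simp
    then show "x = 0" using l1_zero x by blast
  qed
qed

end
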